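(* In the setting of a chain BN $X_0\to X_1\to\dots\to X_{n+1}$ with fixed root marginal $P(X_0=1)=q\in(0,1)$, all non-root nodes sharing the table $P(X_i=1\mid X_{i-1}=b)=p_b$, and $f(x)=x_{n+1}$: (1) if $p_0=10^{-5}$ and $p_1=0.5+10^{-5}+0.353$ (so $D_\mu=0.853$), then $D_\mu+D_\sigma>1.2$ and $L_1(f)=\Omega(1.2^n)$; (2) for every $c\in(0,0.0246]$, if $p_0=c$ and $p_1=0.5+c+2\sqrt c$, then $D_\mu+D_\sigma>1+c$ and $L_1(f)=\Omega((1+c)^n)$.
   Context: $D_\mu=|p_1-p_0|$ and $D_\sigma=|\sqrt{p_1(1-p_1)}-\sqrt{p_0(1-p_0)}|$. For a BN, $\mu_{v,x_{\operatorname{pa}(v)}}=P(X_v=1\mid X_{\operatorname{pa}(v)}=x_{\operatorname{pa}(v)})$, $\sigma_{v,x_{\operatorname{pa}(v)}}=\sqrt{\mu_{v,x_{\operatorname{pa}(v)}}(1-\mu_{v,x_{\operatorname{pa}(v)}})}$, the BN-induced basis is $\phi_v(x)=(x_v-\mu_{v,x_{\operatorname{pa}(v)}})/\sigma_{v,x_{\operatorname{pa}(v)}}$, $\phi_S=\prod_{v\in S}\phi_v$; $\hat f_S=\mathbb{E}[f(X)\phi_S(X)]$; $L_1(f)=\sum_S|\hat f_S|$. Asymptotics are as $n\to\infty$ with $q$ fixed. *)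

theory Defs
  imports Complex_Main "HOL-Library.FuncSet" "HOL-Library.Landau_Symbols"
begin

definition chain_assignments :: "nat \<Rightarrow> (nat \<Rightarrow> real) set" where
  "chain_assignments n = PiE {0..n+1} (\<lambda>_. {0, 1})"

definition chain_mu :: "real \<Rightarrow> real \<Rightarrow> real \<Rightarrow> (nat \<Rightarrow> real) \<Rightarrow> nat \<Rightarrow> real" where
  "chain_mu q p0 p1 x v = (if v = 0 then q else (if x (v - 1) = 1 then p1 else p0))"

definition chain_sigma :: "real \<Rightarrow> real \<Rightarrow> real \<Rightarrow> (nat \<Rightarrow> real) \<Rightarrow> nat \<Rightarrow> real" where
  "chain_sigma q p0 p1 x v = sqrt (chain_mu q p0 p1 x v * (1 - chain_mu q p0 p1 x v))"

definition chain_prob :: "real \<Rightarrow> real \<Rightarrow> real \<Rightarrow> nat \<Rightarrow> (nat \<Rightarrow> real) \<Rightarrow> real" where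
  "chain_prob q p0 p1 n x =
     (\<Prod>v\<in>{0..n+1}. (if x v = 1 then chain_mu q p0 p1 x v else 1 - chain_mu q p0 p1 x v))"

definition chain_phi :: "real \<Rightarrow> real \<Rightarrow> real \<Rightarrow> nat \<Rightarrow> (nat \<Rightarrow> real) \<Rightarrow> real" where
  "chain_phi q p0 p1 v x = (x v - chain_mu q p0 p1 x v) / chain_sigma q p0 p1 x v"

definition chain_phiS :: "real \<Rightarrow> real \<Rightarrow> real \<Rightarrow> nat set \<Rightarrow> (nat \<Rightarrow> real) \<Rightarrow> real" where
  "chain_phiS q p0 p1 S x = (\<Prod>v\<in>S. chain_phi q p0 p1 v x)"

definition chain_fhat :: "real \<Rightarrow> real \<Rightarrow> real \<Rightarrow> nat \<Rightarrow> nat set \<Rightarrow> real" where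
  "chain_fhat q p0 p1 n S =
     (\<Sum>x\<in>chain_assignments n. chain_prob q p0 p1 n x * x (n+1) * chain_phiS q p0 p1 S x)"

definition chain_L1 :: "real \<Rightarrow> real \<Rightarrow> real \<Rightarrow> nat \<Rightarrow> real" where
  "chain_L1 q p0 p1 n = (\<Sum>S\<in>Pow {0..n+1}. \<bar>chain_fhat q p0 p1 n S\<bar>)"

definition D_mu :: "real \<Rightarrow> real \<Rightarrow> real" where
  "D_mu p0 p1 = \<bar>p1 - p0\<bar>"

definition D_sigma :: "real \<Rightarrow> real \<Rightarrow> real" where
  "D_sigma p0 p1 = \<bar>sqrt (p1 * (1 - p1)) - sqrt (p0 * (1 - p0))\<bar>"

end

theory Submission
  imports Defs
begin


lemma peel:
  assumes "k \<notin> A" "finite A" "finite B"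
  shows "(\<Sum>x\<in>PiE (insert k A) (\<lambda>_. B). F x) = (\<Sum>y\<in>B. \<Sum>g\<in>PiE A (\<lambda>_. B). F (g(k:=y)))"
proof -
  have "(\<Sum>x\<in>PiE (insert k A) (\<lambda>_. B). F x) = (\<Sum>p\<in>B \<times> PiE A (\<lambda>_. B). F ((\<lambda>(y, g). g(k := y)) p))"
    unfolding PiE_insert_eq by (subst sum.reindex[OF inj_combinator[OF assms(1)]]) (simp add: o_def)
  also have "\<dots> = (\<Sum>y\<in>B. \<Sum>g\<in>PiE A (\<lambda>_. B). F (g(k:=y)))"
    by (simp add: sum.cartesian_product case_prod_unfold)
  finally show ?thesis .
qed

definition Tm :: "(real \<Rightarrow> real \<Rightarrow> real) \<Rightarrow> (real \<Rightarrow> real) \<Rightarrow> real \<Rightarrow> real" where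
  "Tm G e s = G s 0 * e 0 + G s 1 * e 1"

lemma chain_sum:
  "(\<Sum>x\<in>PiE {0..m} (\<lambda>_. {0,1::real}). h0 (x 0) * (\<Prod>v\<in>{1..m}. G (x (v-1)) (x v)) * e (x m))
    = h0 0 * (Tm G ^^ m) e 0 + h0 1 * (Tm G ^^ m) e 1"
proof (induction m arbitrary: e)
  case 0
  have "{0..0::nat} = insert 0 {}" by auto
  then have "(\<Sum>x\<in>PiE {0..0::nat} (\<lambda>_. {0,1::real}). h0 (x 0) * (\<Prod>v\<in>{1..0}. G (x (v-1)) (x v)) * e (x 0))
     = (\<Sum>y\<in>{0,1::real}. h0 y * e y)" 
    apply (subst \<open>{0..0::nat} = insert 0 {}\<close>)
    apply (subst peel)
    apply auto
    done
  then show ?case by simp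
next
  case (Suc m)
  have ins: "{0..Suc m} = insert (Suc m) {0..m}" by auto
  have "(\<Sum>x\<in>PiE {0..Suc m} (\<lambda>_. {0,1::real}). h0 (x 0) * (\<Prod>v\<in>{1..Suc m}. G (x (v-1)) (x v)) * e (x (Suc m)))
     = (\<Sum>y\<in>{0,1::real}. \<Sum>g\<in>PiE {0..m} (\<lambda>_. {0,1::real}).
          h0 (g 0) * ((\<Prod>v\<in>{1..m}. G (g (v-1)) (g v)) * G (g m) y) * e y)"
    unfolding ins
  proof (subst peel, simp, simp, simp, intro sum.cong refl)
    fix y g
    have p: "(\<Prod>v\<in>{1..Suc m}. G ((g(Suc m := y)) (v-1)) ((g(Suc m := y)) v))
       = (\<Prod>v\<in>{1..m}. G ((g(Suc m := y)) (v-1)) ((g(Suc m := y)) v)) * G (g m) y"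
      by (subst atLeastAtMostSuc_conv) (auto simp: mult.commute)
    have q: "(\<Prod>v\<in>{1..m}. G ((g(Suc m := y)) (v-1)) ((g(Suc m := y)) v)) = (\<Prod>v\<in>{1..m}. G (g (v-1)) (g v))"
      by (rule prod.cong) auto
    show "h0 ((g(Suc m := y)) 0) * (\<Prod>v\<in>{1..Suc m}. G ((g(Suc m := y)) (v-1)) ((g(Suc m := y)) v)) * e ((g(Suc m := y)) (Suc m))
       = h0 (g 0) * ((\<Prod>v\<in>{1..m}. G (g (v-1)) (g v)) * G (g m) y) * e y"
      using p q by simp
  qed
  also have "\<dots> = (\<Sum>g\<in>PiE {0..m} (\<lambda>_. {0,1::real}). h0 (g 0) * (\<Prod>v\<in>{1..m}. G (g (v-1)) (g v)) * Tm G e (g m))"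
    by (simp add: Tm_def sum.distrib[symmetric] algebra_simps)
  also have "\<dots> = h0 0 * (Tm G ^^ m) (Tm G e) 0 + h0 1 * (Tm G ^^ m) (Tm G e) 1"
    by (rule Suc.IH)
  also have "\<dots> = h0 0 * (Tm G ^^ Suc m) e 0 + h0 1 * (Tm G ^^ Suc m) e 1"
    by (simp add: funpow_Suc_right del: funpow.simps)
  finally show ?case .
qed

definition gb :: "real \<Rightarrow> real \<Rightarrow> real \<Rightarrow> real" where
  "gb p0 p1 s = (if s = 1 then p1 + sqrt (p1 * (1 - p1)) else p0 + sqrt (p0 * (1 - p0)))"

definition Gf :: "real \<Rightarrow> real \<Rightarrow> real \<Rightarrow> real \<Rightarrow> real" where
  "Gf p0 p1 s c = (if c = 1 then gb p0 p1 s else 1 - gb p0 p1 s)"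

definition e1 :: "real \<Rightarrow> real" where "e1 c = (if c = 1 then 1 else 0)"

lemma closed_form:
  fixes p0 p1 :: real
  defines "a \<equiv> gb p0 p1 0" and "b \<equiv> gb p0 p1 1"
  assumes "b - a \<noteq> 1"
  shows "(Tm (Gf p0 p1) ^^ m) e1 s = - a / (b - a - 1) + (1 / (b - a - 1)) * (b - a) ^ m * (if s = 1 then b - 1 else a)"
proof (induction m arbitrary: s)
  case 0
  have d: "b - a - 1 \<noteq> 0" using assms by simp
  show ?case
  proof (cases "s = 1")
    case True
    have "- a / (b - a - 1) + (1 / (b - a - 1)) * (b - 1) = 1"
    proof -
      have "- a / (b - a - 1) + (1 / (b - a - 1)) * (b - 1) = (- a + (b - 1)) / (b - a - 1)"
        by (metis add_divide_distrib times_divide_eq_left mult_1 uminus_add_conv_diff add.commute)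
      also have "- a + (b - 1) = b - a - 1" by simp
      finally show ?thesis using d by simp
    qed
    then show ?thesis using True by (simp add: e1_def)
  next
    case False
    have "- a / (b - a - 1) + (1 / (b - a - 1)) * a = 0" by simp
    then show ?thesis using False by (simp add: e1_def)
  qed
next
  case (Suc m)
  define al where "al = - a / (b - a - 1)"
  define be where "be = 1 / (b - a - 1)"
  have g: "gb p0 p1 s = (if s = 1 then b else a)" by (simp add: a_def b_def gb_def)
  have key: "a + gb p0 p1 s * (b - 1 - a) = (b - a) * (if s = 1 then b - 1 else a)"
    unfolding g by (cases "s = 1") (simp_all add: algebra_simps)
  have "(Tm (Gf p0 p1) ^^ Suc m) e1 s = Tm (Gf p0 p1) ((Tm (Gf p0 p1) ^^ m) e1) s" by simp
  also have "\<dots> = Gf p0 p1 s 0 * ((Tm (Gf p0 p1) ^^ m) e1 0) + Gf p0 p1 s 1 * ((Tm (Gf p0 p1) ^^ m) e1 1)"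
    by (simp add: Tm_def)
  also have "\<dots> = (1 - gb p0 p1 s) * (al + be * (b - a) ^ m * a) + gb p0 p1 s * (al + be * (b - a) ^ m * (b - 1))"
    unfolding Suc.IH Gf_def al_def be_def by simp
  also have "\<dots> = al + be * (b - a) ^ m * (a + gb p0 p1 s * (b - 1 - a))"
    by (simp add: algebra_simps)
  also have "\<dots> = al + be * (b - a) ^ Suc m * (if s = 1 then b - 1 else a)"
    unfolding key by simp
  finally show ?case unfolding al_def be_def .
qed

lemma scalar_factor:
  fixes mu c :: real
  assumes "0 < mu" "mu < 1" "c = 0 \<or> c = 1"
  shows "(if c = 1 then mu else 1 - mu) * ((c - mu) / sqrt (mu * (1 - mu)) + 1)
         = (if c = 1 then mu + sqrt (mu * (1 - mu)) else 1 - mu - sqrt (mu * (1 - mu)))"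
proof -
  define sg where "sg = sqrt (mu * (1 - mu))"
  have pos: "sg > 0" using assms by (simp add: sg_def)
  have nn: "mu * (1 - mu) \<ge> 0" using assms by simp
  have sq: "sg * sg = mu * (1 - mu)" unfolding sg_def real_sqrt_mult_self using nn by simp
  have "(if c = 1 then mu else 1 - mu) * ((c - mu) / sg + 1) = (if c = 1 then mu + sg else 1 - mu - sg)"
  proof (cases "c = 1")
    case True
    then show ?thesis using pos sq by (simp add: field_simps; simp add: algebra_simps)
  next
    case False
    then have "c = 0" using assms by auto
    then show ?thesis using pos sq by (simp add: field_simps; simp add: algebra_simps)
  qed
  then show ?thesis by (simp add: sg_def)
qed

lemma factor_eq:
  assumes "0 < p0" "p0 < 1" "0 < p1" "p1 < 1" "v \<noteq> 0" "x v = 0 \<or> x v = 1"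
  shows "(if x v = 1 then chain_mu q p0 p1 x v else 1 - chain_mu q p0 p1 x v) * (chain_phi q p0 p1 v x + 1)
       = Gf p0 p1 (x (v - 1)) (x v)"
proof -
  define mu where "mu = chain_mu q p0 p1 x v"
  have mu: "mu = (if x (v - 1) = 1 then p1 else p0)" using assms(5) by (simp add: mu_def chain_mu_def)
  have "0 < mu" "mu < 1" using mu assms by auto
  from scalar_factor[OF this assms(6)]
  have "(if x v = 1 then mu else 1 - mu) * (chain_phi q p0 p1 v x + 1)
      = (if x v = 1 then mu + sqrt (mu * (1 - mu)) else 1 - mu - sqrt (mu * (1 - mu)))"
    by (simp add: chain_phi_def chain_sigma_def mu_def)
  also have "\<dots> = Gf p0 p1 (x (v - 1)) (x v)"
    unfolding mu Gf_def gb_def by auto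
  finally show ?thesis unfolding mu_def .
qed

lemma L1_lower:
  assumes "0 < p0" "p0 < 1" "0 < p1" "p1 < 1"
  shows "chain_L1 q p0 p1 n \<ge> (1 - q) * (Tm (Gf p0 p1) ^^ (n+1)) e1 0 + q * (Tm (Gf p0 p1) ^^ (n+1)) e1 1"
proof -
  define A where "A = {1..n+1}"
  define C where "C = chain_assignments n"
  define h0 where "h0 = (\<lambda>s::real. if s = 1 then q else 1 - q)"
  have finC: "finite C" unfolding C_def chain_assignments_def by (intro finite_PiE) auto
  have finA: "finite A" unfolding A_def by simp
  have "chain_L1 q p0 p1 n \<ge> (\<Sum>S\<in>Pow A. \<bar>chain_fhat q p0 p1 n S\<bar>)"
    unfolding chain_L1_def by (rule sum_mono2) (auto simp: A_def)
  moreover have "(\<Sum>S\<in>Pow A. \<bar>chain_fhat q p0 p1 n S\<bar>) \<ge> (\<Sum>S\<in>Pow A. chain_fhat q p0 p1 n S)"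
    by (rule sum_mono) simp
  moreover have "(\<Sum>S\<in>Pow A. chain_fhat q p0 p1 n S)
      = (\<Sum>x\<in>C. chain_prob q p0 p1 n x * x (n+1) * (\<Sum>S\<in>Pow A. chain_phiS q p0 p1 S x))"
    unfolding chain_fhat_def C_def by (subst sum.swap) (simp add: sum_distrib_left)
  moreover have "\<dots> = (\<Sum>x\<in>C. h0 (x 0) * (\<Prod>v\<in>{1..n+1}. Gf p0 p1 (x (v-1)) (x v)) * e1 (x (n+1)))"
  proof (rule sum.cong[OF refl])
    fix x assume xC: "x \<in> C"
    have x01: "x v = 0 \<or> x v = 1" if "v \<in> {0..n+1}" for v
      using xC that unfolding C_def chain_assignments_def by (auto simp: PiE_iff)
    have sumS: "(\<Sum>S\<in>Pow A. chain_phiS q p0 p1 S x) = (\<Prod>v\<in>A. chain_phi q p0 p1 v x + 1)"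
      using prod_add[OF finA, of "\<lambda>v. chain_phi q p0 p1 v x" "\<lambda>_. 1"] by (simp add: chain_phiS_def)
    have ins: "{0..n+1} = insert 0 A" unfolding A_def by auto
    have f1: "chain_prob q p0 p1 n x = h0 (x 0) * (\<Prod>v\<in>A. (if x v = 1 then chain_mu q p0 p1 x v else 1 - chain_mu q p0 p1 x v))"
      unfolding chain_prob_def ins using finA by (simp add: A_def h0_def chain_mu_def)
    have f2: "(\<Prod>v\<in>A. (if x v = 1 then chain_mu q p0 p1 x v else 1 - chain_mu q p0 p1 x v)) * (\<Prod>v\<in>A. chain_phi q p0 p1 v x + 1)
        = (\<Prod>v\<in>A. Gf p0 p1 (x (v-1)) (x v))"
      unfolding prod.distrib[symmetric]
      by (rule prod.cong[OF refl], rule factor_eq[OF assms], simp add: A_def, rule x01, auto simp add: A_def)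
    have f3: "x (n+1) = e1 (x (n+1))" using x01[of "n+1"] by (auto simp: e1_def)
    have "chain_prob q p0 p1 n x * x (n+1) * (\<Sum>S\<in>Pow A. chain_phiS q p0 p1 S x)
        = h0 (x 0) * ((\<Prod>v\<in>A. (if x v = 1 then chain_mu q p0 p1 x v else 1 - chain_mu q p0 p1 x v)) * (\<Prod>v\<in>A. chain_phi q p0 p1 v x + 1)) * x (n+1)"
      unfolding sumS f1 by (simp only: mult_ac)
    also have "\<dots> = h0 (x 0) * (\<Prod>v\<in>A. Gf p0 p1 (x (v-1)) (x v)) * e1 (x (n+1))"
      by (simp only: f2 f3[symmetric])
    finally show "chain_prob q p0 p1 n x * x (n+1) * (\<Sum>S\<in>Pow A. chain_phiS q p0 p1 S x)
        = h0 (x 0) * (\<Prod>v\<in>{1..n+1}. Gf p0 p1 (x (v-1)) (x v)) * e1 (x (n+1))"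
      by (simp only: A_def)
  qed
  moreover have "\<dots> = h0 0 * (Tm (Gf p0 p1) ^^ (n+1)) e1 0 + h0 1 * (Tm (Gf p0 p1) ^^ (n+1)) e1 1"
    unfolding C_def chain_assignments_def by (rule chain_sum)
  ultimately show ?thesis by (simp add: h0_def)
qed

lemma omega_from_lower:
  fixes f :: "nat \<Rightarrow> real"
  assumes low: "\<And>n. f n \<ge> al + B * lam ^ n" and "B > 0" "lam > 1" "0 < r" "r \<le> lam"
  shows "f \<in> \<Omega>(\<lambda>n. r ^ n)"
proof -
  obtain N where N: "- 2 * al / B < lam ^ N" using real_arch_pow[OF assms(3)] by blast
  have ev: "eventually (\<lambda>n. norm (f n) \<ge> (B / 2) * norm (r ^ n)) at_top"
    unfolding eventually_at_top_linorder
  proof (intro exI allI impI)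
    fix n assume "n \<ge> N"
    then have "lam ^ N \<le> lam ^ n" using assms(3) by (intro power_increasing) auto
    with N have "- 2 * al / B < lam ^ n" by simp
    then have "- 2 * al < B * lam ^ n" using assms(2) by (metis pos_divide_less_eq mult.commute)
    then have "f n \<ge> (B / 2) * lam ^ n" using low[of n] by simp
    moreover have "r ^ n \<le> lam ^ n" using assms by (intro power_mono) auto
    ultimately have "f n \<ge> (B / 2) * r ^ n"
    proof -
      have "(B / 2) * r ^ n \<le> (B / 2) * lam ^ n" using \<open>r ^ n \<le> lam ^ n\<close> assms(2) by simp
      then show ?thesis using \<open>f n \<ge> (B / 2) * lam ^ n\<close> by linarith
    qed
    then show "norm (f n) \<ge> (B / 2) * norm (r ^ n)" using assms(4) by simp
  qed
  show ?thesis unfolding bigomega_def using ev assms(2)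
    by (intro CollectI exI[of _ "B / 2"]) simp
qed

lemma general:
  fixes p0 p1 q r :: real
  assumes "0 < p0" "p0 < 1" "0 < p1" "p1 < 1" "0 < q" "q < 1"
    and lam: "p1 + sqrt (p1 * (1 - p1)) - (p0 + sqrt (p0 * (1 - p0))) > 1"
    and "0 < r" "r \<le> p1 + sqrt (p1 * (1 - p1)) - (p0 + sqrt (p0 * (1 - p0)))"
  shows "(\<lambda>n. chain_L1 q p0 p1 n) \<in> \<Omega>(\<lambda>n. r ^ n)"
proof -
  define a where "a = gb p0 p1 0"
  define b where "b = gb p0 p1 1"
  have a: "a = p0 + sqrt (p0 * (1 - p0))" by (simp add: a_def gb_def)
  have b: "b = p1 + sqrt (p1 * (1 - p1))" by (simp add: b_def gb_def)
  have apos: "a > 0" using assms by (simp add: a add_pos_nonneg)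
  have l1: "b - a > 1" using lam a b by simp
  then have bne: "b - a \<noteq> 1" by simp
  define be where "be = 1 / (b - a - 1)"
  have bepos: "be > 0" using l1 by (simp add: be_def)
  define K where "K = (1 - q) * a + q * (b - 1)"
  have Kpos: "K > 0" unfolding K_def using assms apos l1
    by (smt (verit) mult_pos_pos mult_nonneg_nonneg)
  define al where "al = - a / (b - a - 1)"
  have low: "chain_L1 q p0 p1 n \<ge> al + (be * K * (b - a)) * (b - a) ^ n" for n
  proof -
    have cf: "\<And>s. (Tm (Gf p0 p1) ^^ (n+1)) e1 s = al + be * (b - a) ^ (n+1) * (if s = 1 then b - 1 else a)"
      using closed_form[of p0 p1 "n+1"] bne unfolding a_def b_def be_def al_def by blast
    have "(1 - q) * (Tm (Gf p0 p1) ^^ (n+1)) e1 0 + q * (Tm (Gf p0 p1) ^^ (n+1)) e1 1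
        = al + (be * K * (b - a)) * (b - a) ^ n"
      unfolding cf K_def by (simp add: algebra_simps)
    then show ?thesis using L1_lower[of p0 p1 q n] assms by simp
  qed
  show ?thesis
    by (rule omega_from_lower[OF low]) (use bepos Kpos l1 assms a b in auto)
qed




lemma part1:
  fixes q p0 p1 :: real
  assumes "0 < q" and "q < 1" and p0: "p0 = 1/100000" and p1: "p1 = 0.5 + 1/100000 + 0.353"
  shows "D_mu p0 p1 + D_sigma p0 p1 > 1.2 \<and> (\<lambda>n. chain_L1 q p0 p1 n) \<in> \<Omega>(\<lambda>n. (1.2::real) ^ n)"
proof -
  have s1: "sqrt (p1 * (1 - p1)) > 177/500"
    by (rule real_less_rsqrt) (simp add: p1 power2_eq_square)
  have "sqrt (p0 * (1 - p0)) < sqrt ((2/625) ^ 2)"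
    by (rule real_sqrt_less_mono) (simp add: p0 power2_eq_square)
  then have s0: "sqrt (p0 * (1 - p0)) < 2/625" by simp
  have pp: "p1 - p0 = 853/1000" "0 < p0" "p0 < 1" "0 < p1" "p1 < 1" by (simp_all add: p0 p1)
  have lam: "p1 + sqrt (p1 * (1 - p1)) - (p0 + sqrt (p0 * (1 - p0))) > 1.2"
    using s1 s0 pp(1) by linarith
  have D: "D_mu p0 p1 + D_sigma p0 p1 = p1 + sqrt (p1 * (1 - p1)) - (p0 + sqrt (p0 * (1 - p0)))"
  proof -
    have "sqrt (p0 * (1 - p0)) \<le> sqrt (p1 * (1 - p1))" using s0 s1 by linarith
    moreover have "p0 \<le> p1" using pp by linarith
    ultimately show ?thesis unfolding D_mu_def D_sigma_def by simp
  qed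
  have "(\<lambda>n. chain_L1 q p0 p1 n) \<in> \<Omega>(\<lambda>n. (1.2::real) ^ n)"
    by (rule general[OF pp(2-5) assms(1,2)]) (use lam in auto)
  then show ?thesis using lam D by simp
qed

lemma part2:
  fixes q c p1 :: real
  assumes "0 < q" and "q < 1" and "0 < c" "c \<le> 0.0246" and p1_def: "p1 = 0.5 + c + 2 * sqrt c"
  shows "D_mu c p1 + D_sigma c p1 > 1 + c \<and> (\<lambda>n. chain_L1 q c p1 n) \<in> \<Omega>(\<lambda>n. (1 + c) ^ n)"
proof -
  define s where "s = sqrt c"
  have p1s: "p1 = 0.5 + c + 2 * s" by (simp add: p1_def s_def)
  have spos: "s > 0" using assms by (simp add: s_def)
  have cs: "c = s ^ 2" using assms by (simp add: s_def)
  have "s \<le> sqrt (0.1569 ^ 2)" unfolding s_def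
    by (rule real_sqrt_le_mono) (use assms in \<open>simp add: power2_eq_square\<close>)
  then have sle: "s \<le> 0.1569" by simp
  have s2: "s ^ 2 \<le> 0.0246" using assms cs by simp
  have s3: "s ^ 3 \<le> 0.1569 * 0.0246"
  proof -
    have "s ^ 3 = s * s ^ 2" by (simp add: power_def)
    also have "\<dots> \<le> 0.1569 * 0.0246" using sle s2 spos by (intro mult_mono) auto
    finally show ?thesis .
  qed
  have poly: "6 * s + 2 * s ^ 2 + 2 * s ^ 3 < 1" using sle s2 s3 by simp
  have ident: "p1 * (1 - p1) - (0.5 - s + s ^ 2) ^ 2 = s * (1 - (6 * s + 2 * s ^ 2 + 2 * s ^ 3))"
    unfolding p1s cs by (simp add: power2_eq_square power3_eq_cube algebra_simps)
  have "s * (1 - (6 * s + 2 * s ^ 2 + 2 * s ^ 3)) > 0" using poly spos by simp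
  then have "(0.5 - s + s ^ 2) ^ 2 < p1 * (1 - p1)" using ident by simp
  then have s1: "sqrt (p1 * (1 - p1)) > 0.5 - s + s ^ 2" by (rule real_less_rsqrt)
  have "sqrt (c * (1 - c)) \<le> sqrt (s ^ 2)"
    by (rule real_sqrt_le_mono) (use assms cs in \<open>simp add: algebra_simps\<close>)
  then have s0: "sqrt (c * (1 - c)) \<le> s" using spos by simp
  have p1lt: "p1 < 1" using sle s2 cs unfolding p1s by simp
  have p1pos: "0 < p1" using spos assms(3) unfolding p1s by linarith
  have lam: "p1 + sqrt (p1 * (1 - p1)) - (c + sqrt (c * (1 - c))) > 1 + c"
    using s1 s0 cs unfolding p1s by simp
  have D: "D_mu c p1 + D_sigma c p1 = p1 + sqrt (p1 * (1 - p1)) - (c + sqrt (c * (1 - c)))"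
  proof -
    have h1: "(0.5::real) - s + s ^ 2 \<ge> 0.5 - s" by simp
    have h2: "(0.5::real) - s \<ge> s" using sle by simp
    have "0.5 - s + s ^ 2 \<ge> s" using h1 h2 by linarith
    then have "sqrt (c * (1 - c)) \<le> sqrt (p1 * (1 - p1))" using s0 s1 by linarith
    moreover have "p1 \<ge> c" using spos unfolding p1s by simp
    ultimately show ?thesis unfolding D_mu_def D_sigma_def by simp
  qed
  have c1: "c < 1" using assms by simp
  have "(\<lambda>n. chain_L1 q c p1 n) \<in> \<Omega>(\<lambda>n. (1 + c) ^ n)"
    by (rule general[OF assms(3) c1 p1pos p1lt assms(1,2)]) (use lam assms(3) in auto)
  then show ?thesis using lam D by simp
qed

theorem mainTheorem10:
  fixes q :: real
  assumes "0 < q" and "q < 1"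
  shows "(let p0 = (1/100000 :: real); p1 = 0.5 + 1/100000 + 0.353 in
            D_mu p0 p1 + D_sigma p0 p1 > 1.2 \<and>
            (\<lambda>n. chain_L1 q p0 p1 n) \<in> \<Omega>(\<lambda>n. (1.2::real) ^ n))
       \<and> (\<forall>c::real. 0 < c \<and> c \<le> 0.0246 \<longrightarrow>
            (let p0 = c; p1 = 0.5 + c + 2 * sqrt c in
              D_mu p0 p1 + D_sigma p0 p1 > 1 + c \<and>
              (\<lambda>n. chain_L1 q p0 p1 n) \<in> \<Omega>(\<lambda>n. (1 + c) ^ n)))"
  unfolding Let_def
proof (intro conjI allI impI)
  show "D_mu (1/100000) (0.5 + 1/100000 + 0.353) + D_sigma (1/100000) (0.5 + 1/100000 + 0.353) > 1.2"
    using part1[OF assms refl refl] by blast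
  show "(\<lambda>n. chain_L1 q (1/100000) (0.5 + 1/100000 + 0.353) n) \<in> \<Omega>(\<lambda>n. (1.2::real) ^ n)"
    using part1[OF assms refl refl] by blast
next
  fix c :: real assume c: "0 < c \<and> c \<le> 0.0246"
  show "D_mu c (0.5 + c + 2 * sqrt c) + D_sigma c (0.5 + c + 2 * sqrt c) > 1 + c"
    using part2[OF assms _ _ refl] c by blast
  show "(\<lambda>n. chain_L1 q c (0.5 + c + 2 * sqrt c) n) \<in> \<Omega>(\<lambda>n. (1 + c) ^ n)"
    using part2[OF assms _ _ refl] c by blast
qed


end
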